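(* Let $\alpha\in(0,1)$ and $\gamma_n=\alpha n$ for each $n$, and let $\lambda_n$ satisfy $\lambda_n=o(n)$ and $\lambda_n=\omega(1)$. Let $K:\mathbb{N}_0\to\mathbb{N}_0$, $n\mapsto K_n$, be a scaling and let \[ r_4(\alpha,\lambda_n) = 1+\frac{\log\!\left(1+\frac{n\alpha}{\lambda_n}\right)+\alpha+\log(1-\alpha)}{\frac{1-\alpha}{2}-\log\!\left(\frac{1+\alpha}{2}\right)}. \] If $K_n > r_4(\alpha,\lambda_n)$ for all $n$, then \[ \lim_{n\to\infty} \mathbb{P}\big[\,|C_{max}(n,K_n,\gamma_n)| > n-\gamma_n-\lambda_n\,\big] = 1. \]
   Context: Random K-out graph $\mathbb{H}(n;K_n)$: on vertex set $V=\{v_1,\dots,v_n\}$ with labels $\mathcal{N}=\{1,\dots,n\}$, each node $v_i$ independently selects a set $\Gamma_{n,i}\subseteq \mathcal{N}\setminus\{i\}$ of $K_n$ distinct labels uniformly at random (the sets $\Gamma_{n,1},\dots,\Gamma_{n,n}$ are mutually independent). Distinct nodes $v_i,v_j$ are adjacent if $j\in\Gamma_{n,i}$ or $i\in\Gamma_{n,j}$ (undirected graph). The graph $\mathbb{H}(n;K_n,\gamma_n)$ is obtained by choosing a set $D\subset V$ of $\gamma_n$ nodes uniformly at random and deleting them: it has vertex set $R=V\setminus D$, and two distinct vertices of $R$ are adjacent iff they are adjacent in $\mathbb{H}(n;K_n)$. $C_{max}(n,K_n,\gamma_n)$ denotes the vertex set of a largest connected component of $\mathbb{H}(n;K_n,\gamma_n)$.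 $\log$ is the natural logarithm; Landau notation is as $n\to\infty$. *)

theory Defs
  imports "HOL-Probability.Probability"
begin

definition kout_choice :: "nat \<Rightarrow> nat \<Rightarrow> (nat \<Rightarrow> nat set) pmf" where
  "kout_choice n K = Pi_pmf {1..n} {}
     (\<lambda>i. pmf_of_set {S. S \<subseteq> {1..n} - {i} \<and> card S = K})"

definition deleted_set :: "nat \<Rightarrow> nat \<Rightarrow> nat set pmf" where
  "deleted_set n g = pmf_of_set {D. D \<subseteq> {1..n} \<and> card D = g}"

definition kout_adj :: "(nat \<Rightarrow> nat set) \<Rightarrow> nat \<Rightarrow> nat \<Rightarrow> bool" where
  "kout_adj \<Gamma> i j \<longleftrightarrow> i \<noteq> j \<and> (j \<in> \<Gamma> i \<or> i \<in> \<Gamma> j)"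

definition induced_edges :: "(nat \<Rightarrow> nat set) \<Rightarrow> nat set \<Rightarrow> (nat \<times> nat) set" where
  "induced_edges \<Gamma> R = {(i, j). i \<in> R \<and> j \<in> R \<and> kout_adj \<Gamma> i j}"

definition component :: "(nat \<Rightarrow> nat set) \<Rightarrow> nat set \<Rightarrow> nat \<Rightarrow> nat set" where
  "component \<Gamma> R v = {u \<in> R. (v, u) \<in> (induced_edges \<Gamma> R)\<^sup>*}"

definition max_component_size :: "(nat \<Rightarrow> nat set) \<Rightarrow> nat set \<Rightarrow> nat" where
  "max_component_size \<Gamma> R = Max (insert 0 ((\<lambda>v. card (component \<Gamma> R v)) ` R))"

definition H_model :: "nat \<Rightarrow> nat \<Rightarrow> nat \<Rightarrow> ((nat \<Rightarrow> nat set) \<times> nat set) pmf" where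
  "H_model n K g = pair_pmf (kout_choice n K) (deleted_set n g)"

definition Cmax_size :: "nat \<Rightarrow> (nat \<Rightarrow> nat set) \<times> nat set \<Rightarrow> nat" where
  "Cmax_size n \<omega> = max_component_size (fst \<omega>) ({1..n} - snd \<omega>)"

definition r4 :: "real \<Rightarrow> real \<Rightarrow> real \<Rightarrow> real" where
  "r4 \<alpha> l n = 1 + (ln (1 + n * \<alpha> / l) + \<alpha> + ln (1 - \<alpha>)) /
                   ((1 - \<alpha>) / 2 - ln ((1 + \<alpha>) / 2))"

end

theory Submission
  imports Defs
begin
lemma exp_ge_pow_fact:
  fixes x :: real assumes "0 \<le> x" shows "x ^ k / fact k \<le> exp x"
proof -
  have s: "(\<lambda>n. x^n / fact n) sums exp x"
    using exp_converges[of x] by (simp add: divide_inverse_commute scaleR_conv_of_real)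
  have "(\<Sum>n\<in>{k}. x^n / fact n) \<le> (\<Sum>n. x^n / fact n)"
    by (rule sum_le_suminf) (use s assms in \<open>auto simp: sums_iff\<close>)
  then show ?thesis using s by (simp add: sums_iff)
qed

lemma binom_e_bound:
  assumes "0 < r"
  shows "real (m choose r) \<le> (exp 1 * real m / real r) ^ r"
proof -
  have f: "0 < (fact r :: real)" by simp
  have "real (m choose r) * fact r \<le> real m ^ r"
    using binomial_fact_pow[of m r] by (metis of_nat_fact of_nat_le_iff of_nat_mult of_nat_power)
  hence a: "real (m choose r) \<le> real m ^ r / fact r" using f by (simp add: field_simps)
  have "real r ^ r / fact r \<le> exp (real r)" by (rule exp_ge_pow_fact) simp
  hence b: "1 / fact r \<le> exp (real r) / real r ^ r" using assms f by (simp add: field_simps)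
  have "real m ^ r / fact r = real m ^ r * (1 / fact r)" by simp
  also have "\<dots> \<le> real m ^ r * (exp (real r) / real r ^ r)"
    by (rule mult_left_mono[OF b]) simp
  also have "\<dots> = (exp 1 * real m / real r) ^ r"
    by (simp add: power_divide power_mult_distrib exp_of_nat_mult[symmetric])
  finally show ?thesis using a by linarith
qed

lemma binom_ratio:
  assumes "w \<le> N" "K \<le> N"
  shows "real (w choose K) / real (N choose K) \<le> ((real w + 1) / (real N + 1)) ^ K"
proof (cases "K \<le> w")
  case False
  then show ?thesis by (simp add: binomial_eq_0)
next
  case True
  have "real (w choose K) / real (N choose K) =
     (\<Prod>i = 0..<K. real (w - i) / real (K - i)) / (\<Prod>i = 0..<K. real (N - i) / real (K - i))"
    using True assms by (simp add: binomial_altdef_of_nat)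
  also have "\<dots> = (\<Prod>i = 0..<K. (real (w - i) / real (K - i)) / (real (N - i) / real (K - i)))"
    by (simp add: prod_dividef)
  also have "\<dots> \<le> (\<Prod>i = 0..<K. (real w + 1) / (real N + 1))"
  proof (rule prod_mono)
    fix i assume i: "i \<in> {0..<K}"
    hence iw: "i < w" "i < N" "i < K" using True assms by auto
    have "(real (w - i) / real (K - i)) / (real (N - i) / real (K - i)) = real (w - i) / real (N - i)"
    proof -
      have "\<And>a b c::real. c \<noteq> 0 \<Longrightarrow> (a/c)/(b/c) = a/b" by (case_tac "b = 0") (simp_all add: field_simps)
      then show ?thesis using iw by simp
    qed
    also have "\<dots> \<le> (real w + 1) / (real N + 1)"
    proof -
      have "real (w - i) * (real N + 1) \<le> (real w + 1) * real (N - i)"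
      proof -
        have h: "0 \<le> (real N - real w) * (1 + real i)" using assms by simp
        have e1: "real (w - i) = real w - real i" "real (N - i) = real N - real i" using iw by (simp_all add: of_nat_diff)
        show ?thesis unfolding e1 using h by (simp add: algebra_simps)
      qed
      then show ?thesis using iw by (simp add: field_simps)
    qed
    finally show "0 \<le> (real (w - i) / real (K - i)) / (real (N - i) / real (K - i)) \<and>
       (real (w - i) / real (K - i)) / (real (N - i) / real (K - i)) \<le> (real w + 1) / (real N + 1)"
      by simp
  qed
  also have "\<dots> = ((real w + 1) / (real N + 1)) ^ K" by simp
  finally show ?thesis .
qed

definition closedS :: "(nat \<Rightarrow> nat set) \<Rightarrow> nat set \<Rightarrow> nat set \<Rightarrow> bool" where
  "closedS \<Gamma> R S \<longleftrightarrow> S \<subseteq> R \<and> (\<forall>i\<in>S. \<forall>j\<in>R - S. \<not> kout_adj \<Gamma> i j)"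

lemma kout_adj_sym: "kout_adj \<Gamma> i j = kout_adj \<Gamma> j i"
  unfolding kout_adj_def by auto

lemma closedS_R: "closedS \<Gamma> R R" unfolding closedS_def by auto

lemma closedS_compl: "closedS \<Gamma> R S \<Longrightarrow> closedS \<Gamma> R (R - S)"
  unfolding closedS_def using kout_adj_sym by blast

lemma closedS_diff: "closedS \<Gamma> R S \<Longrightarrow> closedS \<Gamma> R T \<Longrightarrow> closedS \<Gamma> R (S - T)"
  unfolding closedS_def using kout_adj_sym by blast

lemma component_sub_closed:
  assumes "closedS \<Gamma> R S" "v \<in> S"
  shows "component \<Gamma> R v \<subseteq> S"
proof
  fix u assume "u \<in> component \<Gamma> R v"
  hence "(v, u) \<in> (induced_edges \<Gamma> R)\<^sup>*" by (simp add: component_def)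
  then show "u \<in> S"
  proof (induction rule: rtrancl_induct)
    case base then show ?case using assms by simp
  next
    case (step y z)
    then show ?case using assms unfolding closedS_def induced_edges_def by blast
  qed
qed

lemma component_closed:
  assumes "v \<in> R"
  shows "closedS \<Gamma> R (component \<Gamma> R v)"
  unfolding closedS_def
proof safe
  fix x assume "x \<in> component \<Gamma> R v" then show "x \<in> R" by (simp add: component_def)
next
  fix i j assume i: "i \<in> component \<Gamma> R v" and j: "j \<in> R" "j \<notin> component \<Gamma> R v"
    and a: "kout_adj \<Gamma> i j"
  have "(v, i) \<in> (induced_edges \<Gamma> R)\<^sup>*" "i \<in> R" using i by (auto simp: component_def)
  moreover have "(i, j) \<in> induced_edges \<Gamma> R" using a j \<open>i \<in> R\<close> by (simp add: induced_edges_def)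
  ultimately have "(v, j) \<in> (induced_edges \<Gamma> R)\<^sup>*" by (meson rtrancl_into_rtrancl)
  then show False using j by (simp add: component_def)
qed

lemma component_card_le:
  assumes "finite R" "v \<in> R"
  shows "card (component \<Gamma> R v) \<le> max_component_size \<Gamma> R"
  unfolding max_component_size_def using assms by (intro Max_ge) auto

lemma v_in_component: "v \<in> R \<Longrightarrow> v \<in> component \<Gamma> R v"
  by (simp add: component_def)

lemma exists_closed:
  assumes fin: "finite R" and lp: "0 < lam" and l4: "4 * lam \<le> real (card R)"
    and cm: "real (max_component_size \<Gamma> R) \<le> real (card R) - lam"
  shows "\<exists>S. closedS \<Gamma> R S \<and> lam \<le> real (card S) \<and> 2 * card S \<le> card R"
proof (rule ccontr)
  assume neg: "\<not> ?thesis"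
  define P where "P = (\<lambda>k. \<exists>S. closedS \<Gamma> R S \<and> lam \<le> real (card S) \<and> card S = k)"
  have "P (card R)" unfolding P_def using closedS_R[of \<Gamma> R] lp l4 by (intro exI[of _ R]) auto
  define k where "k = (LEAST k. P k)"
  have "P k" unfolding k_def by (rule LeastI) fact
  then obtain S where S: "closedS \<Gamma> R S" "lam \<le> real (card S)" and Sk: "card S = k"
    unfolding P_def by blast
  have minS: "card S \<le> card S'" if "closedS \<Gamma> R S'" "lam \<le> real (card S')" for S'
  proof -
    have "P (card S')" unfolding P_def using that by blast
    then show ?thesis unfolding Sk k_def by (rule Least_le)
  qed
  have SR: "S \<subseteq> R" using S(1) unfolding closedS_def by blast
  have finS: "finite S" using SR fin by (rule finite_subset)
  have big: "\<not> 2 * card S \<le> card R" using neg S by blast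
  have cRS: "card (R - S) = card R - card S" using SR fin by (simp add: card_Diff_subset finite_subset)
  have "card S \<le> card R" using SR fin by (simp add: card_mono)
  have "\<not> lam \<le> real (card (R - S))"
  proof
    assume "lam \<le> real (card (R - S))"
    moreover have "2 * card (R - S) \<le> card R" using cRS big by linarith
    ultimately show False using neg closedS_compl[OF S(1)] by blast
  qed
  hence small: "real (card R) - real (card S) < lam" using cRS \<open>card S \<le> card R\<close> by (simp add: of_nat_diff)
  have "card S > 0" using S(2) lp by linarith
  hence "S \<noteq> {}" by auto
  then obtain v where v: "v \<in> S" by blast
  define C where "C = component \<Gamma> R v"
  have vR: "v \<in> R" using v SR by blast
  have CS: "C \<subseteq> S" unfolding C_def by (rule component_sub_closed[OF S(1) v])
  have Ccl: "closedS \<Gamma> R C" unfolding C_def by (rule component_closed[OF vR])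
  have "real (card C) \<le> real (max_component_size \<Gamma> R)"
    unfolding C_def using component_card_le[OF fin vR] by simp
  hence Clt: "card C < card S" using cm small by linarith
  have "\<not> lam \<le> real (card C)"
  proof
    assume "lam \<le> real (card C)"
    then show False using minS[OF Ccl] Clt by simp
  qed
  moreover have "\<not> lam \<le> real (card (S - C))"
  proof
    assume a: "lam \<le> real (card (S - C))"
    have "v \<in> C" unfolding C_def by (rule v_in_component[OF vR])
    hence "card (S - C) < card S" using v finS by (intro psubset_card_mono) auto
    then show False using minS[OF closedS_diff[OF S(1) Ccl] a] by linarith
  qed
  moreover have "card S = card C + card (S - C)"
  proof -
    have "finite C" using CS finS by (rule finite_subset)
    then have "card (S - C) = card S - card C" using CS by (simp add: card_Diff_subset)
    moreover have "card C \<le> card S" using CS finS by (simp add: card_mono)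
    ultimately show ?thesis by simp
  qed
  ultimately have "real (card S) < 2 * lam" by linarith
  then show False using big l4 by linarith
qed

lemma prob_one_node:
  assumes D: "D \<subseteq> {1..n}" "card D = g" and S: "S \<subseteq> {1..n} - D" "card S = r"
    and K: "K \<le> n - 1" and i: "i \<in> S"
  shows "measure_pmf.prob (pmf_of_set {T. T \<subseteq> {1..n} - {i} \<and> card T = K})
           {T. T \<inter> (({1..n} - D) - S) = {}} \<le> ((real r + real g) / real n) ^ K"
proof -
  define X where "X = {T. T \<subseteq> {1..n} - {i} \<and> card T = K}"
  define W where "W = (D \<union> S) - {i}"
  have iS: "i \<in> {1..n}" using S i by auto
  have finD: "finite D" using D finite_subset by blast
  have finS: "finite S" using S finite_subset[of S "{1..n}"] by auto
  have cardX: "card X = (n - 1) choose K" unfolding X_def by (subst n_subsets) (use iS in auto)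
  have finX: "finite X" unfolding X_def by (rule finite_subset[of _ "Pow ({1..n} - {i})"]) auto
  have "card X > 0" using cardX K by simp
  hence neX: "X \<noteq> {}" by auto
  have XI: "X \<inter> {T. T \<inter> (({1..n} - D) - S) = {}} = {T. T \<subseteq> W \<and> card T = K}"
    unfolding X_def W_def using D S by auto
  have finW: "finite W" unfolding W_def using finD finS by simp
  have cW: "card W + 1 = g + r"
  proof -
    have "D \<inter> S = {}" using S by auto
    hence "card (D \<union> S) = g + r" using finD finS D S by (simp add: card_Un_disjoint)
    moreover have "i \<in> D \<union> S" using i by simp
    ultimately show ?thesis unfolding W_def using finD finS
      by (metis One_nat_def Suc_pred add_0 card_Diff_singleton card_gt_0_iff finite_UnI
          empty_iff plus_1_eq_Suc add.commute)
  qed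
  have WN: "card W \<le> n - 1"
  proof -
    have "W \<subseteq> {1..n} - {i}" unfolding W_def using D S by auto
    hence "card W \<le> card ({1..n} - {i})" by (intro card_mono) auto
    then show ?thesis using iS by simp
  qed
  have n1: "n \<ge> 1" using iS by simp
  have "measure_pmf.prob (pmf_of_set X) {T. T \<inter> (({1..n} - D) - S) = {}}
      = real (card W choose K) / real ((n - 1) choose K)"
    apply (subst measure_pmf_of_set[OF neX finX])
    apply (subst XI)
    apply (simp add: n_subsets[OF finW] cardX)
    done
  also have "\<dots> \<le> ((real (card W) + 1) / (real (n - 1) + 1)) ^ K"
    by (rule binom_ratio[OF WN K])
  also have "(real (card W) + 1) = real r + real g"
    using cW by (metis add.commute of_nat_1 of_nat_add)
  also have "real (n - 1) + 1 = real n" using n1 by (simp add: of_nat_diff)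
  finally show ?thesis unfolding X_def .
qed

lemma prob_S:
  assumes D: "D \<subseteq> {1..n}" "card D = g" and S: "S \<subseteq> {1..n} - D" "card S = r"
    and K: "K \<le> n - 1"
  shows "measure_pmf.prob (kout_choice n K) {\<Gamma>. \<forall>i\<in>S. \<Gamma> i \<inter> (({1..n} - D) - S) = {}}
          \<le> (((real r + real g) / real n) ^ K) ^ r"
proof -
  define Q where "Q = ({1..n} - D) - S"
  define q where "q = ((real r + real g) / real n) ^ K"
  define B where "B = (\<lambda>i. if i \<in> S then {T. T \<inter> Q = {}} else (UNIV :: nat set set))"
  have Ssub: "\<And>x. x \<in> S \<Longrightarrow> x \<in> {1..n}" using S by auto
  have eq: "{\<Gamma>. \<forall>i\<in>S. \<Gamma> i \<inter> Q = {}} = Pi {1..n} B"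
  proof (intro set_eqI iffI)
    fix \<Gamma> assume "\<Gamma> \<in> {\<Gamma>. \<forall>i\<in>S. \<Gamma> i \<inter> Q = {}}"
    then show "\<Gamma> \<in> Pi {1..n} B" unfolding B_def Pi_def by auto
  next
    fix \<Gamma> assume a: "\<Gamma> \<in> Pi {1..n} B"
    have "\<Gamma> i \<inter> Q = {}" if "i \<in> S" for i
    proof -
      have "\<Gamma> i \<in> B i" using a Ssub[OF that] unfolding Pi_def by blast
      then show ?thesis using that unfolding B_def by simp
    qed
    then show "\<Gamma> \<in> {\<Gamma>. \<forall>i\<in>S. \<Gamma> i \<inter> Q = {}}" by blast
  qed
  have "measure_pmf.prob (kout_choice n K) (Pi {1..n} B)
      = (\<Prod>i\<in>{1..n}. measure_pmf.prob (pmf_of_set {T. T \<subseteq> {1..n} - {i} \<and> card T = K}) (B i))"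
    unfolding kout_choice_def by (rule measure_Pi_pmf_Pi) simp
  also have "\<dots> \<le> (\<Prod>i\<in>{1..n}. (if i \<in> S then q else 1))"
  proof (rule prod_mono)
    fix i assume "i \<in> {1..n}"
    show "0 \<le> measure_pmf.prob (pmf_of_set {T. T \<subseteq> {1..n} - {i} \<and> card T = K}) (B i) \<and>
        measure_pmf.prob (pmf_of_set {T. T \<subseteq> {1..n} - {i} \<and> card T = K}) (B i) \<le> (if i \<in> S then q else 1)"
    proof (cases "i \<in> S")
      case True
      then show ?thesis unfolding B_def Q_def q_def using prob_one_node[OF D S K True] by simp
    next
      case False
      then show ?thesis by simp
    qed
  qed
  also have "(\<Prod>i\<in>{1..n}. (if i \<in> S then q else 1)) = q ^ r"
  proof -
    have "(\<Prod>i\<in>{1..n}. (if i \<in> S then q else 1)) = prod (\<lambda>_. q) {i\<in>{1..n}. i \<in> S}"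
      by (rule prod.inter_filter[symmetric]) simp
    also have "{i\<in>{1..n}. i \<in> S} = S" using S by auto
    finally show ?thesis using S by simp
  qed
  finally show ?thesis unfolding eq[symmetric] Q_def q_def .
qed

lemma closedS_imp_E:
  assumes "closedS \<Gamma> R S" shows "\<forall>i\<in>S. \<Gamma> i \<inter> (R - S) = {}"
proof (intro ballI equalityI subsetI)
  fix i j assume i: "i \<in> S" and j: "j \<in> \<Gamma> i \<inter> (R - S)"
  have "i \<noteq> j" using i j by auto
  hence "kout_adj \<Gamma> i j" using j unfolding kout_adj_def by auto
  then show "j \<in> {}" using assms i j unfolding closedS_def by auto
qed simp

lemma prob_bad_D:
  assumes D: "D \<subseteq> {1..n}" "card D = g" and K: "K \<le> n - 1" and lp: "0 < lam"
    and l4: "4 * lam \<le> real (n - g)"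
  shows "measure_pmf.prob (kout_choice n K)
           {\<Gamma>. \<not> real (max_component_size \<Gamma> ({1..n} - D)) > real n - real g - lam}
     \<le> (\<Sum>r\<in>{r. lam \<le> real r \<and> 2 * r \<le> n - g}.
           real ((n - g) choose r) * (((real r + real g) / real n) ^ K) ^ r)"
proof -
  define R where "R = {1..n} - D"
  define m where "m = n - g"
  define f where "f = (\<lambda>r::nat. (((real r + real g) / real n) ^ K) ^ r)"
  define SS where "SS = {S. S \<subseteq> R \<and> lam \<le> real (card S) \<and> 2 * card S \<le> m}"
  define E where "E = (\<lambda>S. {\<Gamma>. \<forall>i\<in>S. \<Gamma> i \<inter> (R - S) = {}})"
  define Rr where "Rr = {r. lam \<le> real r \<and> 2 * r \<le> m}"
  have finR: "finite R" unfolding R_def by simp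
  have gn: "g \<le> n" using D card_mono[of "{1..n}" D] by simp
  have cR: "card R = m" unfolding R_def m_def using D by (simp add: card_Diff_subset finite_subset)
  have finSS: "finite SS" unfolding SS_def
    by (rule finite_subset[of _ "Pow R"]) (use finR in auto)
  have finRr: "finite Rr" unfolding Rr_def by (rule finite_subset[of _ "{..m}"]) auto
  have sub: "{\<Gamma>. \<not> real (max_component_size \<Gamma> ({1..n} - D)) > real n - real g - lam} \<subseteq> (\<Union>S\<in>SS. E S)"
  proof
    fix \<Gamma> assume "\<Gamma> \<in> {\<Gamma>. \<not> real (max_component_size \<Gamma> ({1..n} - D)) > real n - real g - lam}"
    hence "real (max_component_size \<Gamma> R) \<le> real (card R) - lam"
      unfolding R_def using cR gn unfolding m_def R_def by (simp add: of_nat_diff)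
    moreover have "4 * lam \<le> real (card R)" using l4 cR m_def by simp
    ultimately obtain S where S: "closedS \<Gamma> R S" "lam \<le> real (card S)" "2 * card S \<le> card R"
      using exists_closed[OF finR lp] by blast
    have "S \<in> SS" using S cR unfolding SS_def closedS_def by auto
    moreover have "\<Gamma> \<in> E S" using closedS_imp_E[OF S(1)] unfolding E_def by simp
    ultimately show "\<Gamma> \<in> (\<Union>S\<in>SS. E S)" by blast
  qed
  have "measure_pmf.prob (kout_choice n K)
           {\<Gamma>. \<not> real (max_component_size \<Gamma> ({1..n} - D)) > real n - real g - lam}
        \<le> measure_pmf.prob (kout_choice n K) (\<Union>S\<in>SS. E S)"
    by (rule measure_pmf.finite_measure_mono[OF sub]) simp
  also have "\<dots> \<le> (\<Sum>S\<in>SS. measure_pmf.prob (kout_choice n K) (E S))"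
    by (rule measure_pmf.finite_measure_subadditive_finite[OF finSS]) simp
  also have "\<dots> \<le> (\<Sum>S\<in>SS. f (card S))"
  proof (rule sum_mono)
    fix S assume "S \<in> SS"
    hence "S \<subseteq> {1..n} - D" unfolding SS_def R_def by simp
    then show "measure_pmf.prob (kout_choice n K) (E S) \<le> f (card S)"
      unfolding E_def f_def R_def using prob_S[OF D _ refl K] by simp
  qed
  also have "\<dots> = (\<Sum>r\<in>Rr. sum (\<lambda>S. f (card S)) {S \<in> SS. card S = r})"
    by (rule sum.group[symmetric, OF finSS finRr]) (auto simp: SS_def Rr_def)
  also have "\<dots> = (\<Sum>r\<in>Rr. real (m choose r) * f r)"
  proof (rule sum.cong[OF refl])
    fix r assume r: "r \<in> Rr"
    have "{S \<in> SS. card S = r} = {S. S \<subseteq> R \<and> card S = r}"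
      using r unfolding SS_def Rr_def by auto
    hence "sum (\<lambda>S. f (card S)) {S \<in> SS. card S = r} = sum (\<lambda>S. f r) {S. S \<subseteq> R \<and> card S = r}"
      by (intro sum.cong) auto
    also have "\<dots> = real (m choose r) * f r" using n_subsets[OF finR, of r] cR by simp
    finally show "sum (\<lambda>S. f (card S)) {S \<in> SS. card S = r} = real (m choose r) * f r" .
  qed
  finally show ?thesis unfolding Rr_def m_def f_def .
qed

lemma pair_bound:
  fixes A :: "'g pmf" and B :: "'d pmf" and E :: "('g \<times> 'd) set"
  assumes h: "\<And>D. D \<in> set_pmf B \<Longrightarrow> measure_pmf.prob A {\<Gamma>. (\<Gamma>, D) \<in> E} \<le> eps"
  shows "measure_pmf.prob (pair_pmf A B) E \<le> eps"
proof -
  obtain D0 where "D0 \<in> set_pmf B" using set_pmf_not_empty by fast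
  hence eps0: "0 \<le> eps" using h[of D0] measure_nonneg order_trans by blast
  define sw :: "'d \<times> 'g \<Rightarrow> 'g \<times> 'd" where "sw = (\<lambda>(x, y). (y, x))"
  have "emeasure (measure_pmf (pair_pmf A B)) E = emeasure (measure_pmf (pair_pmf B A)) (sw -` E)"
    by (subst pair_commute_pmf) (simp add: sw_def)
  also have "\<dots> = (\<integral>\<^sup>+D. emeasure (measure_pmf (map_pmf (Pair D) A)) (sw -` E) \<partial>measure_pmf B)"
    unfolding pair_pmf_def map_pmf_def by simp
  also have "\<dots> = (\<integral>\<^sup>+D. emeasure (measure_pmf A) {\<Gamma>. (\<Gamma>, D) \<in> E} \<partial>measure_pmf B)"
    by (intro nn_integral_cong) (simp add: sw_def vimage_def)
  also have "\<dots> \<le> (\<integral>\<^sup>+D. ennreal eps \<partial>measure_pmf B)"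
  proof (rule nn_integral_mono_AE)
    show "AE D in measure_pmf B. emeasure (measure_pmf A) {\<Gamma>. (\<Gamma>, D) \<in> E} \<le> ennreal eps"
      unfolding AE_measure_pmf_iff
      using h by (simp add: measure_pmf.emeasure_eq_measure ennreal_leI)
  qed
  also have "\<dots> = ennreal eps" by (simp add: measure_pmf.emeasure_space_1)
  finally have "ennreal (measure_pmf.prob (pair_pmf A B) E) \<le> ennreal eps"
    by (simp add: measure_pmf.emeasure_eq_measure)
  then show ?thesis using eps0 by simp
qed

lemma caseB:
  fixes \<alpha> nr r g :: real and K :: nat
  assumes a: "0 < \<alpha>" "\<alpha> < 1" and r: "0 < r" and nr: "0 < nr" and rK: "nr < r * real K"
    and rg: "(r + g) / nr \<le> (1 + \<alpha>) / 2" and g: "0 \<le> g"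
    and Kb: "4 * exp 1 / (ln (2 / (1 + \<alpha>)))\<^sup>2 \<le> real K"
  shows "exp 1 * nr / r * ((r + g) / nr) ^ K \<le> 1 / 2"
proof -
  define \<rho> where "\<rho> = (1 + \<alpha>) / 2"
  define L where "L = ln (2 / (1 + \<alpha>))"
  have \<rho>0: "0 < \<rho>" using a unfolding \<rho>_def by simp
  have L0: "0 < L" unfolding L_def using a by simp
  have Lr: "L = - ln \<rho>" unfolding L_def \<rho>_def using a by (simp add: ln_div)
  have Kpos: "0 < real K"
  proof (rule ccontr)
    assume "\<not> 0 < real K"
    hence "K = 0" by simp
    then show False using rK nr by simp
  qed
  have h1: "((r + g) / nr) ^ K \<le> \<rho> ^ K"
    using rg r g nr unfolding \<rho>_def by (intro power_mono) auto
  have h2: "\<rho> ^ K = 1 / exp (L * real K)"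
  proof -
    have "\<rho> ^ K = exp (ln \<rho>) ^ K" using \<rho>0 by simp
    also have "\<dots> = exp (real K * ln \<rho>)" by (simp add: exp_of_nat_mult)
    also have "\<dots> = 1 / exp (L * real K)" unfolding Lr by (simp add: exp_minus field_simps)
    finally show ?thesis .
  qed
  have h3: "(L * real K) ^ 2 / 2 \<le> exp (L * real K)"
    using exp_ge_pow_fact[of "L * real K" 2] L0 Kpos by (simp add: numeral_2_eq_2)
  have LK: "0 < L * real K" using L0 Kpos by simp
  have h4: "\<rho> ^ K \<le> 2 / (L * real K) ^ 2"
  proof -
    have "1 / exp (L * real K) \<le> 1 / ((L * real K) ^ 2 / 2)"
      by (rule divide_left_mono[OF h3]) (use LK Kpos L0 in \<open>auto intro!: mult_pos_pos\<close>)
    then show ?thesis unfolding h2 by simp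
  qed
  have h5: "nr / r \<le> real K" using rK r by (simp add: field_simps)
  have "exp 1 * nr / r * ((r + g) / nr) ^ K \<le> exp 1 * real K * (2 / (L * real K) ^ 2)"
  proof -
    have "exp 1 * nr / r * ((r + g) / nr) ^ K = exp 1 * (nr / r) * ((r + g) / nr) ^ K" by simp
    also have "\<dots> \<le> exp 1 * real K * (2 / (L * real K) ^ 2)"
    proof (rule mult_mono)
      show "exp 1 * (nr / r) \<le> exp 1 * real K" using h5 by (intro mult_left_mono) auto
      show "((r + g) / nr) ^ K \<le> 2 / (L * real K) ^ 2" using h1 h4 by linarith
      show "0 \<le> exp 1 * real K" by simp
      show "0 \<le> ((r + g) / nr) ^ K" using r g nr by simp
    qed
    finally show ?thesis .
  qed
  also have "\<dots> = 2 * exp 1 / (L ^ 2 * real K)" using Kpos by (simp add: field_simps power2_eq_square)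
  also have "\<dots> \<le> 1 / 2"
  proof -
    have "4 * exp 1 \<le> L ^ 2 * real K" using Kb L0 unfolding L_def[symmetric] by (simp add: field_simps)
    then show ?thesis using L0 Kpos by (simp add: field_simps)
  qed
  finally show ?thesis .
qed

lemma caseA:
  fixes \<alpha> nr r g lam c C0 :: real and K :: nat
  assumes a: "0 < \<alpha>" "\<alpha> < 1" and nr: "0 < nr" and lp: "0 < lam" and lr: "lam \<le> r"
    and rK: "r * real K \<le> nr" and g: "0 \<le> g" "g \<le> \<alpha> * nr"
    and hyp: "1 + nr * \<alpha> / lam < exp (c * real K - C0)"
    and dpos: "0 < - ln \<alpha> - c"
    and Kb: "2 * (exp (1 + 1 / \<alpha> - C0) / \<alpha>) / (- ln \<alpha> - c) \<le> real K"
  shows "exp 1 * nr / r * ((r + g) / nr) ^ K \<le> 1 / 2"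
proof -
  define y where "y = r / nr"
  define \<delta> where "\<delta> = - ln \<alpha> - c"
  define A1 where "A1 = exp (1 + 1 / \<alpha> - C0) / \<alpha>"
  have r0: "0 < r" using lp lr by linarith
  have y0: "0 < y" unfolding y_def using r0 nr by simp
  have A10: "0 < A1" unfolding A1_def using a by simp
  have h1: "(r + g) / nr \<le> \<alpha> + y"
  proof -
    have "g / nr \<le> \<alpha>" using g nr by (simp add: field_simps)
    then show ?thesis unfolding y_def by (simp add: add_divide_distrib)
  qed
  have h2: "\<alpha> + y \<le> \<alpha> * exp (y / \<alpha>)"
  proof -
    have "1 + y / \<alpha> \<le> exp (y / \<alpha>)" by (rule exp_ge_add_one_self)
    hence "\<alpha> * (1 + y / \<alpha>) \<le> \<alpha> * exp (y / \<alpha>)" using a by simp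
    moreover have "\<alpha> * (1 + y / \<alpha>) = \<alpha> + y" using a by (simp add: distrib_left)
    ultimately show ?thesis by simp
  qed
  have h3: "((r + g) / nr) ^ K \<le> \<alpha> ^ K * exp (real K * y / \<alpha>)"
  proof -
    have "((r + g) / nr) ^ K \<le> (\<alpha> * exp (y / \<alpha>)) ^ K"
      using h1 h2 r0 g nr by (intro power_mono) auto
    also have "\<dots> = \<alpha> ^ K * exp (real K * (y / \<alpha>))"
      by (simp only: power_mult_distrib exp_of_nat_mult[symmetric])
    finally show ?thesis by simp
  qed
  have Ky: "real K * y \<le> 1" using rK nr unfolding y_def by (simp add: field_simps)
  have h4: "exp (real K * y / \<alpha>) \<le> exp (1 / \<alpha>)"
    using Ky a by (simp add: divide_right_mono)
  have h5: "\<alpha> ^ K = exp (real K * ln \<alpha>)"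
  proof -
    have "\<alpha> ^ K = exp (ln \<alpha>) ^ K" using a by simp
    also have "\<dots> = exp (real K * ln \<alpha>)" by (simp only: exp_of_nat_mult)
    finally show ?thesis .
  qed
  have h6: "nr / r \<le> exp (c * real K - C0) / \<alpha>"
  proof -
    have "nr / r \<le> nr / lam" using lp lr nr by (intro divide_left_mono) auto
    moreover have "nr * \<alpha> / lam < exp (c * real K - C0)" using hyp by linarith
    hence "nr / lam < exp (c * real K - C0) / \<alpha>" using a lp by (simp add: field_simps)
    ultimately show ?thesis by linarith
  qed
  have "exp 1 * nr / r * ((r + g) / nr) ^ K
      \<le> exp 1 * (exp (c * real K - C0) / \<alpha>) * (exp (real K * ln \<alpha>) * exp (1 / \<alpha>))"
  proof -
    have "exp 1 * nr / r * ((r + g) / nr) ^ K = exp 1 * (nr / r) * ((r + g) / nr) ^ K" by simp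
    also have "\<dots> \<le> exp 1 * (exp (c * real K - C0) / \<alpha>) * (exp (real K * ln \<alpha>) * exp (1 / \<alpha>))"
    proof (rule mult_mono)
      show "exp 1 * (nr / r) \<le> exp 1 * (exp (c * real K - C0) / \<alpha>)"
        using h6 by (intro mult_left_mono) auto
      have "((r + g) / nr) ^ K \<le> \<alpha> ^ K * exp (1 / \<alpha>)"
        using h3 h4 a by (meson mult_left_mono order_trans zero_le_power less_imp_le)
      then show "((r + g) / nr) ^ K \<le> exp (real K * ln \<alpha>) * exp (1 / \<alpha>)" using h5 by simp
      show "0 \<le> exp 1 * (exp (c * real K - C0) / \<alpha>)" using a by simp
      show "0 \<le> ((r + g) / nr) ^ K" using r0 g nr by simp
    qed
    finally show ?thesis .
  qed
  also have "\<dots> = A1 / exp (\<delta> * real K)"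
    unfolding A1_def \<delta>_def using a
    by (simp add: exp_add[symmetric] exp_diff exp_minus field_simps)
  also have "\<dots> \<le> 1 / 2"
  proof -
    have "2 * A1 / \<delta> \<le> real K" using Kb unfolding A1_def \<delta>_def .
    hence "2 * A1 \<le> \<delta> * real K" using dpos unfolding \<delta>_def[symmetric] by (simp add: field_simps)
    also have "\<delta> * real K \<le> exp (\<delta> * real K)"
      using exp_ge_add_one_self[of "\<delta> * real K"] by linarith
    finally show ?thesis using A10 by (simp add: field_simps)
  qed
  finally show ?thesis .
qed

lemma c_pos:
  fixes \<alpha> :: real assumes "0 < \<alpha>" "\<alpha> < 1"
  shows "0 < (1 - \<alpha>) / 2 - ln ((1 + \<alpha>) / 2)"
proof -
  have "ln ((1 + \<alpha>) / 2) < 0" using assms by (intro ln_less_zero) auto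
  moreover have "0 < (1 - \<alpha>) / 2" using assms by simp
  ultimately show ?thesis by linarith
qed

lemma delta_pos:
  fixes \<alpha> :: real assumes a: "0 < \<alpha>" "\<alpha> < 1"
  shows "0 < - ln \<alpha> - ((1 - \<alpha>) / 2 - ln ((1 + \<alpha>) / 2))"
proof -
  define x where "x = (1 + \<alpha>) / (2 * \<alpha>)"
  have x0: "0 < x" unfolding x_def using a by simp
  have lx: "ln x = ln ((1 + \<alpha>) / 2) - ln \<alpha>"
  proof -
    have "x = ((1 + \<alpha>) / 2) / \<alpha>" unfolding x_def by simp
    moreover have "ln (((1 + \<alpha>) / 2) / \<alpha>) = ln ((1 + \<alpha>) / 2) - ln \<alpha>"
      by (rule ln_divide_pos) (use a in auto)
    ultimately show ?thesis by simp
  qed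
  have "ln (1 / x) \<le> 1 / x - 1" using x0 by (intro ln_le_minus_one) simp
  hence "1 - 1 / x \<le> ln x" using x0 by (simp add: ln_div)
  moreover have "1 / x = 2 * \<alpha> / (1 + \<alpha>)" unfolding x_def by simp
  moreover have "(1 - \<alpha>) / 2 < 1 - 2 * \<alpha> / (1 + \<alpha>)"
  proof -
    have "1 - 2 * \<alpha> / (1 + \<alpha>) = (1 - \<alpha>) / (1 + \<alpha>)" using a by (simp add: field_simps)
    moreover have "(1 - \<alpha>) / 2 < (1 - \<alpha>) / (1 + \<alpha>)" using a by (intro divide_strict_left_mono) auto
    ultimately show ?thesis by simp
  qed
  ultimately show ?thesis using lx by linarith
qed

definition Kstar :: "real \<Rightarrow> real" where
  "Kstar \<alpha> = max (2 * (exp (1 + 1 / \<alpha> - (((1 - \<alpha>) / 2 - ln ((1 + \<alpha>) / 2)) + \<alpha> + ln (1 - \<alpha>))) / \<alpha>)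
                    / (- ln \<alpha> - ((1 - \<alpha>) / 2 - ln ((1 + \<alpha>) / 2))))
                 (4 * exp 1 / (ln (2 / (1 + \<alpha>)))\<^sup>2)"

lemma term_bound:
  fixes \<alpha> lam :: real and n g K r :: nat
  assumes a: "0 < \<alpha>" "\<alpha> < 1" and n: "0 < n" and lp: "0 < lam" and lr: "lam \<le> real r"
    and g: "real g \<le> \<alpha> * real n" and rg: "2 * r \<le> n - g" and gn: "g \<le> n"
    and hyp: "real K > r4 \<alpha> lam (real n)"
    and Kb: "Kstar \<alpha> \<le> real K"
  shows "real ((n - g) choose r) * (((real r + real g) / real n) ^ K) ^ r \<le> (1 / 2) ^ r"
proof -
  define c where "c = (1 - \<alpha>) / 2 - ln ((1 + \<alpha>) / 2)"
  define C0 where "C0 = c + \<alpha> + ln (1 - \<alpha>)"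
  define X where "X = ((real r + real g) / real n) ^ K"
  have c0: "0 < c" unfolding c_def using c_pos[OF a] .
  have r0: "0 < r" using lp lr by simp
  have X0: "0 \<le> X" unfolding X_def by simp
  have base: "exp 1 * real n / real r * X \<le> 1 / 2"
  proof (cases "real r * real K \<le> real n")
    case True
    have "ln (1 + real n * \<alpha> / lam) < c * real K - C0"
    proof -
      have "1 + (ln (1 + real n * \<alpha> / lam) + \<alpha> + ln (1 - \<alpha>)) / c < real K"
        using hyp unfolding r4_def c_def by simp
      hence "(ln (1 + real n * \<alpha> / lam) + \<alpha> + ln (1 - \<alpha>)) / c < real K - 1" by linarith
      hence "ln (1 + real n * \<alpha> / lam) + \<alpha> + ln (1 - \<alpha>) < (real K - 1) * c"
        using c0 by (simp add: divide_less_eq)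
      then show ?thesis unfolding C0_def by (simp add: algebra_simps)
    qed
    moreover have "0 < 1 + real n * \<alpha> / lam" using n a lp by (simp add: add_pos_nonneg)
    ultimately have h: "1 + real n * \<alpha> / lam < exp (c * real K - C0)"
      by (metis exp_less_cancel_iff exp_ln)
    show ?thesis unfolding X_def
    proof (rule caseA[OF a _ lp lr True _ g h])
      show "0 < real n" using n by simp
      show "0 \<le> real g" by simp
      show "0 < - ln \<alpha> - c" unfolding c_def using delta_pos[OF a] .
      show "2 * (exp (1 + 1 / \<alpha> - C0) / \<alpha>) / (- ln \<alpha> - c) \<le> real K"
        using Kb unfolding Kstar_def C0_def c_def by linarith
    qed
  next
    case False
    show ?thesis unfolding X_def
    proof (rule caseB[OF a])
      show "0 < real r" using r0 by simp
      show "0 < real n" using n by simp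
      show "real n < real r * real K" using False by linarith
      have "2 * r + g \<le> n" using rg gn by linarith
      hence "real (2 * r + g) \<le> real n" by (simp only: of_nat_le_iff)
      hence "2 * (real r + real g) \<le> real n + real g" by simp
      also have "\<dots> \<le> real n * (1 + \<alpha>)" using g by (simp add: algebra_simps)
      finally show "(real r + real g) / real n \<le> (1 + \<alpha>) / 2" using n by (simp add: field_simps)
      show "0 \<le> real g" by simp
      show "4 * exp 1 / (ln (2 / (1 + \<alpha>)))\<^sup>2 \<le> real K" using Kb unfolding Kstar_def by linarith
    qed
  qed
  have "real ((n - g) choose r) \<le> (exp 1 * real (n - g) / real r) ^ r"
    by (rule binom_e_bound) (use r0 in simp)
  also have "\<dots> \<le> (exp 1 * real n / real r) ^ r"
    using gn by (intro power_mono divide_right_mono mult_left_mono) auto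
  finally have b1: "real ((n - g) choose r) \<le> (exp 1 * real n / real r) ^ r" .
  have "real ((n - g) choose r) * X ^ r \<le> (exp 1 * real n / real r) ^ r * X ^ r"
    using b1 X0 by (intro mult_right_mono) auto
  also have "\<dots> = (exp 1 * real n / real r * X) ^ r" by (simp only: power_mult_distrib)
  also have "\<dots> \<le> (1 / 2) ^ r"
    using base X0 n by (intro power_mono) auto
  finally show ?thesis unfolding X_def .
qed

lemma geom_ivl: "(\<Sum>r\<in>{a..<a+k}. (1/2::real)^r) = 2 * (1/2)^a - 2 * (1/2)^(a+k)"
proof (induction k)
  case 0 then show ?case by simp
next
  case (Suc k)
  have "(\<Sum>r\<in>{a..<a + Suc k}. (1/2::real)^r) = (\<Sum>r\<in>{a..<a+k}. (1/2::real)^r) + (1/2)^(a+k)"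
    by (simp add: sum.atLeastLessThan_Suc)
  then show ?case using Suc by simp
qed

lemma geom_tail:
  assumes "finite I" "\<And>r. r \<in> I \<Longrightarrow> a \<le> r"
  shows "(\<Sum>r\<in>I. (1/2::real)^r) \<le> 2 * (1/2)^a"
proof -
  obtain k where k: "I \<subseteq> {..<k}" using finite_nat_bounded[OF assms(1)] by blast
  have "I \<subseteq> {a..<a+k}" using k assms(2) by auto
  hence "(\<Sum>r\<in>I. (1/2::real)^r) \<le> (\<Sum>r\<in>{a..<a+k}. (1/2::real)^r)"
    by (intro sum_mono2) auto
  also have "\<dots> \<le> 2 * (1/2)^a" unfolding geom_ivl by simp
  finally show ?thesis .
qed

lemma bad_bound:
  fixes \<alpha> lam :: real and n g K :: nat
  assumes a: "0 < \<alpha>" "\<alpha> < 1" and n: "0 < n" and lp: "0 < lam"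
    and g: "real g \<le> \<alpha> * real n" and gn: "g \<le> n" and l4: "4 * lam \<le> real (n - g)"
    and Kn: "K < n"
    and hyp: "real K > r4 \<alpha> lam (real n)"
    and Kb: "Kstar \<alpha> \<le> real K"
  shows "measure_pmf.prob (H_model n K g) {\<omega>. \<not> real (Cmax_size n \<omega>) > real n - real g - lam}
           \<le> 2 * (1/2) ^ nat \<lceil>lam\<rceil>"
  unfolding H_model_def
proof (rule pair_bound)
  fix D assume "D \<in> set_pmf (deleted_set n g)"
  moreover have "{D. D \<subseteq> {1..n} \<and> card D = g} \<noteq> {}"
  proof -
    have "card {D. D \<subseteq> {1..n} \<and> card D = g} = n choose g" using n_subsets[of "{1..n}" g] by simp
    moreover have "0 < n choose g" using gn by simp
    ultimately show ?thesis by (metis card.empty less_irrefl)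
  qed
  moreover have "finite {D. D \<subseteq> {1..n} \<and> card D = g}"
    by (rule finite_subset[of _ "Pow {1..n}"]) auto
  ultimately have D: "D \<subseteq> {1..n}" "card D = g" unfolding deleted_set_def by auto
  define Rr where "Rr = {r. lam \<le> real r \<and> 2 * r \<le> n - g}"
  have finRr: "finite Rr" unfolding Rr_def by (rule finite_subset[of _ "{..n}"]) auto
  have "measure_pmf.prob (kout_choice n K)
          {\<Gamma>. (\<Gamma>, D) \<in> {\<omega>. \<not> real (Cmax_size n \<omega>) > real n - real g - lam}}
      = measure_pmf.prob (kout_choice n K)
           {\<Gamma>. \<not> real (max_component_size \<Gamma> ({1..n} - D)) > real n - real g - lam}"
    by (simp add: Cmax_size_def)
  also have "\<dots> \<le> (\<Sum>r\<in>Rr. real ((n - g) choose r) * (((real r + real g) / real n) ^ K) ^ r)"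
    unfolding Rr_def by (rule prob_bad_D[OF D _ lp l4]) (use Kn in simp)
  also have "\<dots> \<le> (\<Sum>r\<in>Rr. (1/2::real) ^ r)"
  proof (rule sum_mono)
    fix r assume "r \<in> Rr"
    hence r: "lam \<le> real r" "2 * r \<le> n - g" unfolding Rr_def by auto
    show "real ((n - g) choose r) * (((real r + real g) / real n) ^ K) ^ r \<le> (1/2) ^ r"
      by (rule term_bound[OF a n lp r(1) g r(2) gn hyp Kb])
  qed
  also have "\<dots> \<le> 2 * (1/2) ^ nat \<lceil>lam\<rceil>"
  proof (rule geom_tail[OF finRr])
    fix r assume "r \<in> Rr"
    hence "lam \<le> real r" unfolding Rr_def by auto
    then show "nat \<lceil>lam\<rceil> \<le> r" by linarith
  qed
  finally show "measure_pmf.prob (kout_choice n K)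
          {\<Gamma>. (\<Gamma>, D) \<in> {\<omega>. \<not> real (Cmax_size n \<omega>) > real n - real g - lam}} \<le> 2 * (1/2) ^ nat \<lceil>lam\<rceil>" .
qed

theorem theorem3p4:
  fixes \<alpha> :: real and lam :: "nat \<Rightarrow> real" and K :: "nat \<Rightarrow> nat" and \<gamma> :: "nat \<Rightarrow> nat"
  assumes "0 < \<alpha>" "\<alpha> < 1"
    and "\<And>n. \<gamma> n = nat \<lfloor>\<alpha> * real n\<rfloor>"
    and "lam \<in> o(\<lambda>n. real n)"
    and "filterlim lam at_top sequentially"
    and "\<forall>\<^sub>F n in sequentially. K n < n"
    and "\<And>n. real (K n) > r4 \<alpha> (lam n) (real n)"
  shows "(\<lambda>n. measure_pmf.prob (H_model n (K n) (\<gamma> n))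
            {\<omega>. real (Cmax_size n \<omega>) > real n - real (\<gamma> n) - lam n})
         \<longlonglongrightarrow> 1"
proof -
  note a = assms(1,2)
  define c where "c = (1 - \<alpha>) / 2 - ln ((1 + \<alpha>) / 2)"
  define C1 where "C1 = \<alpha> + ln (1 - \<alpha>)"
  define T where "T = Kstar \<alpha>"
  define eps where "eps = \<alpha> / exp (c * (T - 1) - C1)"
  define eps' where "eps' = (1 - \<alpha>) / 4"
  define bad where "bad = (\<lambda>n. {\<omega>. \<not> real (Cmax_size n \<omega>) > real n - real (\<gamma> n) - lam n})"
  define B where "B = (\<lambda>n. measure_pmf.prob (H_model n (K n) (\<gamma> n)) (bad n))"
  have c0: "0 < c" unfolding c_def using c_pos[OF a] .
  have eps0: "0 < eps" unfolding eps_def using a by simp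
  have eps'0: "0 < eps'" unfolding eps'_def using a by simp
  have ev1: "\<forall>\<^sub>F n in sequentially. 0 < lam n"
    using assms(5) unfolding filterlim_at_top_dense by blast
  have ev2: "\<forall>\<^sub>F n in sequentially. norm (lam n) \<le> eps * norm (real n)"
    by (rule landau_o.smallD[OF assms(4) eps0])
  have ev3: "\<forall>\<^sub>F n in sequentially. norm (lam n) \<le> eps' * norm (real n)"
    by (rule landau_o.smallD[OF assms(4) eps'0])
  have ev4: "\<forall>\<^sub>F n in sequentially. 1 \<le> n" by (rule eventually_ge_at_top)
  have evB: "\<forall>\<^sub>F n in sequentially. B n \<le> 2 * (1/2) ^ nat \<lceil>lam n\<rceil>"
    using eventually_conj[OF ev1 eventually_conj[OF ev2 eventually_conj[OF ev3 eventually_conj[OF ev4 assms(6)]]]]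
  proof (rule eventually_mono)
    fix n assume h: "0 < lam n \<and> norm (lam n) \<le> eps * norm (real n) \<and>
      norm (lam n) \<le> eps' * norm (real n) \<and> 1 \<le> n \<and> K n < n"
    hence lp: "0 < lam n" and le1: "lam n \<le> eps * real n" and le2: "lam n \<le> eps' * real n"
      and n1: "1 \<le> n" and Kn: "K n < n" by auto
    define g where "g = \<gamma> n"
    have g1: "real g \<le> \<alpha> * real n"
      unfolding g_def assms(3) using a by simp
    have gn: "g \<le> n"
    proof -
      have "\<alpha> * real n \<le> real n" using a by (simp add: mult_left_le_one_le)
      hence "real g \<le> real n" using g1 by linarith
      then show ?thesis by simp
    qed
    have l4: "4 * lam n \<le> real (n - g)"
    proof -
      have "real (n - g) = real n - real g" using gn by (simp add: of_nat_diff)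
      also have "\<dots> \<ge> (1 - \<alpha>) * real n" using g1 by (simp add: algebra_simps)
      finally show ?thesis using le2 unfolding eps'_def by simp
    qed
    have Kb: "Kstar \<alpha> \<le> real (K n)"
    proof -
      have npos: "0 < real n" using n1 by simp
      have "\<alpha> / eps \<le> real n * \<alpha> / lam n"
        using le1 lp eps0 a npos by (simp add: field_simps)
      moreover have "\<alpha> / eps = exp (c * (T - 1) - C1)" unfolding eps_def using a by simp
      ultimately have "exp (c * (T - 1) - C1) \<le> 1 + real n * \<alpha> / lam n" by simp
      hence "c * (T - 1) - C1 \<le> ln (1 + real n * \<alpha> / lam n)"
        by (metis exp_gt_zero exp_le_cancel_iff exp_ln order_less_le_trans)
      hence "c * (T - 1) \<le> ln (1 + real n * \<alpha> / lam n) + \<alpha> + ln (1 - \<alpha>)"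
        unfolding C1_def by simp
      hence "T - 1 \<le> (ln (1 + real n * \<alpha> / lam n) + \<alpha> + ln (1 - \<alpha>)) / c"
        using c0 by (simp add: field_simps)
      hence "T \<le> r4 \<alpha> (lam n) (real n)" unfolding r4_def c_def by simp
      then show ?thesis using assms(7)[of n] unfolding T_def by simp
    qed
    show "B n \<le> 2 * (1/2) ^ nat \<lceil>lam n\<rceil>"
      unfolding B_def bad_def g_def[symmetric]
      by (rule bad_bound[OF a _ lp g1 gn l4 Kn assms(7) Kb]) (use n1 in simp)
  qed
  have lim0: "(\<lambda>n. 2 * (1/2::real) ^ nat \<lceil>lam n\<rceil>) \<longlonglongrightarrow> 0"
  proof -
    have f: "filterlim (\<lambda>n. nat \<lceil>lam n\<rceil>) at_top sequentially"
      unfolding filterlim_at_top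
    proof
      fix Z :: nat
      have "\<forall>\<^sub>F n in sequentially. real Z \<le> lam n" using assms(5) unfolding filterlim_at_top by blast
      then show "\<forall>\<^sub>F n in sequentially. Z \<le> nat \<lceil>lam n\<rceil>"
        by (rule eventually_mono) linarith
    qed
    have "(\<lambda>n. (1/2::real) ^ nat \<lceil>lam n\<rceil>) \<longlonglongrightarrow> 0"
      by (rule filterlim_compose[OF LIMSEQ_realpow_zero f]) simp_all
    then show ?thesis using tendsto_mult_right_zero by blast
  qed
  have B0: "B \<longlonglongrightarrow> 0"
  proof (rule tendsto_sandwich[OF _ evB tendsto_const lim0])
    show "\<forall>\<^sub>F n in sequentially. 0 \<le> B n" unfolding B_def by simp
  qed
  have eq: "\<And>n. measure_pmf.prob (H_model n (K n) (\<gamma> n))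
            {\<omega>. real (Cmax_size n \<omega>) > real n - real (\<gamma> n) - lam n} = 1 - B n"
  proof -
    fix n
    have "{\<omega>. real (Cmax_size n \<omega>) > real n - real (\<gamma> n) - lam n}
        = space (measure_pmf (H_model n (K n) (\<gamma> n))) - bad n"
      unfolding bad_def by auto
    moreover have "measure_pmf.prob (H_model n (K n) (\<gamma> n))
        (space (measure_pmf (H_model n (K n) (\<gamma> n))) - bad n) = 1 - B n"
      unfolding B_def by (rule measure_pmf.prob_compl) simp
    ultimately show "measure_pmf.prob (H_model n (K n) (\<gamma> n))
            {\<omega>. real (Cmax_size n \<omega>) > real n - real (\<gamma> n) - lam n} = 1 - B n"
      by simp
  qed
  show ?thesis unfolding eq using tendsto_diff[OF tendsto_const B0, of 1] by simp
qed
end
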